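(* Let $1\le M\le N$ and let $\mathbf{B}=[\mathbf{b}_1,\dots,\mathbf{b}_M]$ be a complex $N\times M$ matrix with linearly independent columns and orthogonality defect $$\delta=\frac{\|\mathbf{b}_1\|^2\|\mathbf{b}_2\|^2\cdots\|\mathbf{b}_M\|^2}{\det(\mathbf{B}^{\mathtt{H}}\mathbf{B})}.$$ Let $\mathbf{B}^{-\mathtt{H}}=[\mathbf{a}_1,\dots,\mathbf{a}_M]$ denote the Hermitian of the inverse of $\mathbf{B}$ (of its pseudo-inverse if $M<N$), i.e. $\mathbf{B}^{-\mathtt{H}}=\mathbf{B}(\mathbf{B}^{\mathtt{H}}\mathbf{B})^{-1}$. Then $$\max\{\|\mathbf{b}_1\|,\dots,\|\mathbf{b}_M\|\}\le\frac{\sqrt{\delta}}{\min\{\|\mathbf{a}_1\|,\dots,\|\mathbf{a}_M\|\}}$$ and $$\max\{\|\mathbf{a}_1\|,\dots,\|\mathbf{a}_M\|\}\le\frac{\sqrt{\delta}}{\min\{\|\mathbf{b}_1\|,\dots,\|\mathbf{b}_M\|\}}.$$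
   Context: $(\cdot)^{\mathtt{H}}$ denotes the conjugate transpose, and $\|\cdot\|$ the Euclidean norm on $\mathbb{C}^N$. *)

theory Defs
  imports "HOL-Analysis.Analysis"
begin

definition hermitian_transpose :: "complex ^'m ^'n \<Rightarrow> complex ^'n ^'m" where
  "hermitian_transpose B = (\<chi> i j. cnj (B $ j $ i))"

end

theory Submission
  imports Defs
begin

definition ip :: "complex^'n \<Rightarrow> complex^'n \<Rightarrow> complex" where
  "ip u v = (\<Sum>k\<in>UNIV. cnj (u$k) * v$k)"

lemma ip_cnj: "cnj (ip u v) = ip v u"
  by (simp add: ip_def mult.commute)

lemma ip_self: "ip u u = complex_of_real ((norm u)^2)"
proof -
  have "(norm u)^2 = (\<Sum>k\<in>UNIV. (norm (u$k))^2)"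
    by (simp add: norm_vec_def L2_set_def sum_nonneg)
  moreover have "cnj (u$k) * u$k = complex_of_real ((norm (u$k))^2)" for k
    by (metis complex_norm_square mult.commute)
  ultimately show ?thesis
    by (simp add: ip_def)
qed

lemma ip_zero: "ip u u = 0 \<Longrightarrow> u = 0"
  by (simp add: ip_self)

lemma inner_ip: "inner u v = Re (ip u v)"
  by (simp add: inner_vec_def ip_def inner_complex_def Re_sum)

lemma ip_diff_left: "ip (u - v) w = ip u w - ip v w"
  by (simp add: ip_def algebra_simps sum_subtractf)

lemma ip_mv_right: "ip u (B *v x) = (\<Sum>k\<in>UNIV. x$k * ip u (column k B))"
proof -
  have "ip u (B *v x) = (\<Sum>j\<in>UNIV. \<Sum>k\<in>UNIV. cnj (u$j) * (B$j$k * x$k))"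
    by (simp add: ip_def matrix_vector_mult_def sum_distrib_left)
  also have "\<dots> = (\<Sum>k\<in>UNIV. \<Sum>j\<in>UNIV. cnj (u$j) * (B$j$k * x$k))"
    by (rule sum.swap)
  also have "\<dots> = (\<Sum>k\<in>UNIV. x$k * ip u (column k B))"
    by (simp add: ip_def column_def sum_distrib_left mult.commute mult.left_commute)
  finally show ?thesis .
qed

lemma ip_mv_left: "ip (B *v x) u = (\<Sum>k\<in>UNIV. cnj (x$k) * ip (column k B) u)"
proof -
  have "ip (B *v x) u = cnj (ip u (B *v x))" by (simp add: ip_cnj)
  also have "\<dots> = (\<Sum>k\<in>UNIV. cnj (x$k) * ip (column k B) u)"
    by (simp add: ip_mv_right ip_cnj)
  finally show ?thesis .
qed

lemma gram_entry: "(hermitian_transpose B ** B)$j$k = ip (column j B) (column k B)"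
  by (simp add: hermitian_transpose_def matrix_matrix_mult_def ip_def column_def)

lemma col_basis: "B *v axis k (1::complex) = column k B"
  by (simp add: matrix_vector_mult_def column_def axis_def vec_eq_iff if_distrib cong: if_cong)

lemma herm_mult: "hermitian_transpose (A ** B) = hermitian_transpose B ** hermitian_transpose A"
  by (simp add: hermitian_transpose_def matrix_matrix_mult_def vec_eq_iff mult.commute)

lemma det_herm: "det (hermitian_transpose E) = cnj (det (E::complex^'n^'n))"
proof -
  have "hermitian_transpose E = transpose (\<chi> i j. cnj (E$i$j))"
    by (simp add: hermitian_transpose_def transpose_def)
  then have "det (hermitian_transpose E) = det (\<chi> i j. cnj (E$i$j))"
    by (simp only: det_transpose)
  then show ?thesis
    by (simp add: det_def)
qed

lemma det_gram_op:
  fixes B :: "complex^'m^'n" and E :: "complex^'m^'m"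
  shows "det (hermitian_transpose (B ** E) ** (B ** E)) = cnj (det E) * det (hermitian_transpose B ** B) * det E"
proof -
  have "hermitian_transpose (B ** E) ** (B ** E) = hermitian_transpose E ** (hermitian_transpose B ** B) ** E"
    by (simp add: herm_mult matrix_mul_assoc)
  then show ?thesis by (simp add: det_mul det_herm)
qed


lemma det_E:
  fixes x :: "complex^'m"
  assumes xi: "x$i = 0"
  shows "det ((\<chi> r s. if s = i then (if r = i then 1 else - x$r) else (if r = s then 1 else 0)) :: complex^'m^'m) = 1"
proof -
  let ?E = "(\<chi> r s. if s = i then (if r = i then 1 else - x$r) else (if r = s then 1 else 0)) :: complex^'m^'m"
  let ?I = "mat 1 :: complex^'m^'m"
  have sp: "(\<Sum>j\<in>UNIV-{i}. (- x$j) *s row j ?I) \<in> vec.span {row j ?I |j. j \<noteq> i}"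
    by (intro vec.span_sum vec.span_scale vec.span_base) auto
  have eq: "(\<Sum>j\<in>UNIV-{i}. (- x$j) *s row j ?I) = - x"
  proof (rule iffD2[OF vec_eq_iff], rule allI)
    fix s
    have "(\<Sum>j\<in>UNIV-{i}. (- x$j) *s row j ?I)$s = (\<Sum>j\<in>UNIV-{i}. (- x$j) * (if j = s then 1 else 0))"
      by (simp add: row_def mat_def)
    also have "\<dots> = - x$s"
      using xi by (cases "s = i") (auto simp: if_distrib sum.delta cong: if_cong)
    finally show "(\<Sum>j\<in>UNIV-{i}. (- x$j) *s row j ?I)$s = (- x)$s" by simp
  qed
  have te: "transpose ?E = (\<chi> k. if k = i then row i ?I + (- x) else row k ?I)"
  proof (rule iffD2[OF vec_eq_iff], rule allI, rule iffD2[OF vec_eq_iff], rule allI)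
    fix k s
    show "transpose ?E $ k $ s = (\<chi> k. if k = i then row i ?I + (- x) else row k ?I) $ k $ s"
      using xi by (cases "k = i"; cases "s = i") (simp_all add: transpose_def row_def mat_def)
  qed
  have "det ?E = det (transpose ?E)" by (rule det_transpose[symmetric])
  also have "\<dots> = det (\<chi> k. if k = i then row i ?I + (- x) else row k ?I)"
    by (simp only: te)
  also have "\<dots> = det ?I"
    by (rule det_row_span) (use sp eq in simp)
  finally show ?thesis by simp
qed

lemma col_op:
  fixes B :: "complex^'m^'n" and x :: "complex^'m"
  assumes xi: "x$i = 0"
  obtains B' where "det (hermitian_transpose B' ** B') = det (hermitian_transpose B ** B)"
    "column i B' = column i B - B *v x" "\<And>k. k \<noteq> i \<Longrightarrow> column k B' = column k B"
proof -
  let ?E = "(\<chi> r s. if s = i then (if r = i then 1 else - x$r) else (if r = s then 1 else 0)) :: complex^'m^'m"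
  have "det (hermitian_transpose (B ** ?E) ** (B ** ?E)) = det (hermitian_transpose B ** B)"
    by (simp add: det_gram_op det_E[OF xi])
  moreover have "column i (B ** ?E) = column i B - B *v x"
  proof (rule iffD2[OF vec_eq_iff], rule allI)
    fix r
    have "column i (B ** ?E) $ r = (\<Sum>t\<in>UNIV. B$r$t * (if t = i then 1 else - x$t))"
      by (simp add: column_def matrix_matrix_mult_def)
    also have "\<dots> = (\<Sum>t\<in>UNIV. (if t = i then B$r$t else 0) - B$r$t * x$t)"
      by (rule sum.cong) (auto simp: xi)
    also have "\<dots> = (column i B - B *v x) $ r"
      by (simp add: sum_subtractf column_def matrix_vector_mult_def)
    finally show "column i (B ** ?E) $ r = (column i B - B *v x) $ r" .
  qed
  moreover have "column k (B ** ?E) = column k B" if "k \<noteq> i" for k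
  proof -
    have "(\<Sum>t\<in>UNIV. B$r$t * ?E$t$k) = B$r$k" for r
    proof -
      have "(\<Sum>t\<in>UNIV. B$r$t * ?E$t$k) = (\<Sum>t\<in>UNIV. if t = k then B$r$t else 0)"
        by (rule sum.cong) (use that in auto)
      then show ?thesis by simp
    qed
    then show ?thesis by (simp add: vec_eq_iff column_def matrix_matrix_mult_def)
  qed
  ultimately show ?thesis using that by blast
qed

lemma sum_delta_mult: "(\<Sum>j\<in>(UNIV::'a::finite set). (if j = k then a else 0) * (f j::complex)) = a * f k"
proof -
  have "(\<Sum>j\<in>(UNIV::'a set). (if j = k then a else 0) * f j) = (\<Sum>j\<in>UNIV. if j = k then a * f j else 0)"
    by (rule sum.cong) auto
  then show ?thesis by simp
qed

lemma proj_exists: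
  fixes B :: "complex^'m^'n"
  obtains x where "x$i = 0" "\<And>k. k \<noteq> i \<Longrightarrow> ip (column k B) (column i B - B *v x) = 0"
proof -
  define W where "W = {B *v x | x. x$i = 0}"
  have sc: "c *\<^sub>R (B *v x) = B *v (c *\<^sub>R x)" for c x
    by (simp add: vec_eq_iff matrix_vector_mult_def scaleR_sum_right)
  have "subspace W"
  proof -
    have "0 \<in> W" unfolding W_def by (rule CollectI, rule exI[of _ 0]) simp
    moreover have "u + v \<in> W" if uW: "u \<in> W" "v \<in> W" for u v
    proof -
      obtain p where "u = B *v p" "p$i = 0"
        using uW(1) unfolding W_def by blast
      moreover obtain q where "v = B *v q" "q$i = 0"
        using uW(2) unfolding W_def by blast
      ultimately show ?thesis unfolding W_def
        by (auto intro!: exI[of _ "p + q"] simp: matrix_vector_right_distrib)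
    qed
    moreover have "c *\<^sub>R u \<in> W" if uW: "u \<in> W" for u c
    proof -
      obtain p where "u = B *v p" "p$i = 0"
        using uW unfolding W_def by blast
      then show ?thesis unfolding W_def
        by (auto intro!: exI[of _ "c *\<^sub>R p"] simp: sc)
    qed
    ultimately show ?thesis unfolding subspace_def by blast
  qed
  then have spW: "span W = W" by simp
  obtain y z where y: "y \<in> span W" and z: "\<And>w. w \<in> span W \<Longrightarrow> orthogonal z w"
    and yz: "column i B = y + z"
    using orthogonal_subspace_decomp_exists[of W "column i B"] by blast
  from y spW obtain x where x: "x$i = 0" "y = B *v x" unfolding W_def by auto
  have "ip (column k B) (column i B - B *v x) = 0" if k: "k \<noteq> i" for k
  proof -
    have zz: "z = column i B - B *v x" using yz x by simp
    have "B *v axis k 1 \<in> W" "B *v axis k \<i> \<in> W" unfolding W_def using k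
      by (auto simp: axis_def)
    then have o1: "inner z (B *v axis k 1) = 0" and o2: "inner z (B *v axis k \<i>) = 0"
      using z spW by (auto simp: orthogonal_def)
    have s1: "ip z (B *v axis k 1) = ip z (column k B)"
      by (simp add: ip_mv_right axis_def sum_delta_mult)
    have s2: "ip z (B *v axis k \<i>) = \<i> * ip z (column k B)"
      by (simp add: ip_mv_right axis_def sum_delta_mult)
    have "Re (ip z (column k B)) = 0" "Im (ip z (column k B)) = 0"
      using o1 o2 s1 s2 by (auto simp: inner_ip)
    then have "ip z (column k B) = 0" by (simp add: complex_eq_iff)
    then have "ip (column k B) z = 0" by (metis ip_cnj complex_cnj_zero)
    then show ?thesis using zz by simp
  qed
  then show ?thesis using that x by blast
qed


lemma hadamard_ind:
  fixes S :: "'m::finite set"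
  assumes "finite S"
  shows "\<forall>B::complex^'m^'n. (\<forall>k j. k \<notin> S \<longrightarrow> j \<noteq> k \<longrightarrow> ip (column j B) (column k B) = 0) \<longrightarrow>
    Im (det (hermitian_transpose B ** B)) = 0 \<and> 0 \<le> Re (det (hermitian_transpose B ** B)) \<and>
    Re (det (hermitian_transpose B ** B)) \<le> (\<Prod>j\<in>UNIV. (norm (column j B))^2)"
  using assms
proof (induction S rule: finite_induct)
  case empty
  show ?case
  proof (intro allI impI)
    fix B :: "complex^'m^'n"
    assume h: "\<forall>k j. k \<notin> {} \<longrightarrow> j \<noteq> k \<longrightarrow> ip (column j B) (column k B) = 0"
    have "det (hermitian_transpose B ** B) = (\<Prod>j\<in>UNIV. (hermitian_transpose B ** B)$j$j)"
      by (rule det_diagonal) (use h in \<open>simp add: gram_entry\<close>)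
    also have "\<dots> = complex_of_real (\<Prod>j\<in>UNIV. (norm (column j B))^2)"
      by (simp add: gram_entry ip_self)
    finally have e: "det (hermitian_transpose B ** B) = complex_of_real (\<Prod>j\<in>UNIV. (norm (column j B))^2)" .
    show "Im (det (hermitian_transpose B ** B)) = 0 \<and> 0 \<le> Re (det (hermitian_transpose B ** B)) \<and>
      Re (det (hermitian_transpose B ** B)) \<le> (\<Prod>j\<in>UNIV. (norm (column j B))^2)"
      by (simp only: e Re_complex_of_real Im_complex_of_real) (simp add: prod_nonneg)
  qed
next
  case (insert i S)
  show ?case
  proof (intro allI impI)
    fix B :: "complex^'m^'n"
    assume h: "\<forall>k j. k \<notin> insert i S \<longrightarrow> j \<noteq> k \<longrightarrow> ip (column j B) (column k B) = 0"
    obtain x where xi: "x$i = 0" and xo: "\<And>k. k \<noteq> i \<Longrightarrow> ip (column k B) (column i B - B *v x) = 0"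
      by (rule proj_exists[of i B]) blast+
    define c where "c = column i B - B *v x"
    obtain B' where d: "det (hermitian_transpose B' ** B') = det (hermitian_transpose B ** B)"
      and ci: "column i B' = c" and ck: "\<And>k. k \<noteq> i \<Longrightarrow> column k B' = column k B"
      using col_op[OF xi] c_def by metis
    have cB: "column k B' = (if k = i then c else column k B)" for k using ci ck by auto
    have ck0: "ip c (column k B) = 0" if "k \<noteq> i" for k
    proof -
      have "ip (column k B) c = 0" using xo that c_def by simp
      then show ?thesis by (metis ip_cnj complex_cnj_zero)
    qed
    have h': "\<forall>k j. k \<notin> S \<longrightarrow> j \<noteq> k \<longrightarrow> ip (column j B') (column k B') = 0"
    proof (intro allI impI)
      fix k j assume k: "k \<notin> S" and jk: "j \<noteq> k"
      show "ip (column j B') (column k B') = 0"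
      proof (cases "k = i")
        case True then show ?thesis using jk xo c_def cB by simp
      next
        case False
        show ?thesis
        proof (cases "j = i")
          case True
          then show ?thesis using True False cB ck0 by simp
        next
          case False2: False
          then show ?thesis using h k jk False cB by simp
        qed
      qed
    qed
    have IH: "Im (det (hermitian_transpose B' ** B')) = 0 \<and> 0 \<le> Re (det (hermitian_transpose B' ** B')) \<and>
      Re (det (hermitian_transpose B' ** B')) \<le> (\<Prod>j\<in>UNIV. (norm (column j B'))^2)"
      using insert.IH h' by blast
    have cx: "ip c (B *v x) = 0"
    proof -
      have "ip c (B *v x) = (\<Sum>k\<in>UNIV. x$k * ip c (column k B))" by (rule ip_mv_right)
      also have "\<dots> = 0" by (rule sum.neutral) (metis xi ck0 mult_zero_left mult_zero_right)
      finally show ?thesis .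
    qed
    have "(norm (column i B))^2 = (norm c)^2 + (norm (B *v x))^2"
    proof -
      have "orthogonal c (B *v x)" using cx by (simp add: orthogonal_def inner_ip)
      then have "(norm (c + B *v x))^2 = (norm c)^2 + (norm (B *v x))^2" by (rule norm_add_Pythagorean)
      moreover have "c + B *v x = column i B" by (simp add: c_def)
      ultimately show ?thesis by simp
    qed
    then have nc: "(norm c)^2 \<le> (norm (column i B))^2"
      using zero_le_power2[of "norm (B *v x)"] by linarith
    have pr: "(\<Prod>j\<in>UNIV. (norm (column j B'))^2) \<le> (\<Prod>j\<in>UNIV. (norm (column j B))^2)"
      by (rule prod_mono) (auto simp: cB nc power2_le_imp_le[OF nc])
    show "Im (det (hermitian_transpose B ** B)) = 0 \<and> 0 \<le> Re (det (hermitian_transpose B ** B)) \<and>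
      Re (det (hermitian_transpose B ** B)) \<le> (\<Prod>j\<in>UNIV. (norm (column j B))^2)"
      using IH d pr by auto
  qed
qed

lemma hadamard:
  fixes B :: "complex^'m^'n"
  shows "Im (det (hermitian_transpose B ** B)) = 0 \<and> 0 \<le> Re (det (hermitian_transpose B ** B)) \<and>
    Re (det (hermitian_transpose B ** B)) \<le> (\<Prod>j\<in>UNIV. (norm (column j B))^2)"
  using hadamard_ind[of "UNIV::'m set"] by auto


lemma key_i:
  fixes B :: "complex^'m^'n" and i :: 'm
  assumes indep: "\<forall>c :: complex ^'m. B *v c = 0 \<longrightarrow> c = 0"
  defines "G \<equiv> hermitian_transpose B ** B"
  defines "A \<equiv> B ** matrix_inv G"
  shows "(norm (column i A))^2 * (norm (column i B))^2 * Re (det G) \<le> (\<Prod>j\<in>UNIV. (norm (column j B))^2)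
     \<and> norm (column i A) > 0"
proof -
  have Gent: "G$j$k = ip (column j B) (column k B)" for j k by (simp add: G_def gram_entry)
  have Gv: "(G *v y)$k = ip (column k B) (B *v y)" for y k
    by (simp only: ip_mv_right) (simp add: matrix_vector_mult_def Gent mult.commute)
  have "G *v y = 0 \<longrightarrow> y = 0" for y
  proof
    assume "G *v y = 0"
    then have "ip (B *v y) (B *v y) = 0"
      by (simp add: ip_mv_left flip: Gv)
    then have "B *v y = 0" by (rule ip_zero)
    then show "y = 0" using indep by blast
  qed
  then have "\<exists>X. X ** G = mat 1" using matrix_left_invertible_ker by blast
  then have invG: "invertible G" using invertible_left_inverse by blast
  then have GG: "G ** matrix_inv G = mat 1"
    unfolding invertible_def matrix_inv_def by (rule someI_ex[where P="\<lambda>X. G ** X = mat 1 \<and> X ** G = mat 1", THEN conjunct1])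
  define w where "w = matrix_inv G *v axis i 1"
  define a where "a = column i A"
  have aB: "a = B *v w"
    by (simp add: a_def w_def A_def matrix_vector_mul_assoc flip: col_basis)
  have dual: "ip (column k B) a = (if k = i then 1 else 0)" for k
  proof -
    have "ip (column k B) a = (G *v w)$k" by (simp add: Gv aB)
    also have "\<dots> = ((G ** matrix_inv G) *v axis i 1)$k" by (simp add: w_def matrix_vector_mul_assoc)
    also have "\<dots> = (if k = i then 1 else 0)" by (simp add: GG axis_def)
    finally show ?thesis .
  qed
  obtain x where xi: "x$i = 0" and xo: "\<And>k. k \<noteq> i \<Longrightarrow> ip (column k B) (column i B - B *v x) = 0"
    by (rule proj_exists[of i B]) blast+
  define c where "c = column i B - B *v x"
  have ck0: "ip c (column k B) = 0" if "k \<noteq> i" for k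
  proof -
    have "ip (column k B) c = 0" using xo that c_def by simp
    then show ?thesis by (metis ip_cnj complex_cnj_zero)
  qed
  have Bxc: "ip (B *v x) c = 0"
  proof -
    have "ip (B *v x) c = (\<Sum>k\<in>UNIV. cnj (x$k) * ip (column k B) c)" by (rule ip_mv_left)
    also have "\<dots> = 0" by (rule sum.neutral) (metis xi xo c_def complex_cnj_zero mult_zero_left mult_zero_right)
    finally show ?thesis .
  qed
  have ipbc: "ip (column k B) c = (if k = i then ip c c else 0)" for k
  proof (cases "k = i")
    case True
    have "ip c c = ip (column i B) c - ip (B *v x) c" by (simp add: c_def ip_diff_left)
    then show ?thesis using True Bxc by simp
  next
    case False then show ?thesis using xo c_def by simp
  qed
  have aa: "ip a a = cnj (w$i)"
    by (simp add: aB[symmetric] ip_mv_left[of B w a, folded aB] dual mult.commute[of "cnj _"] sum_delta_mult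
        flip: aB)
  have ac: "ip a c = cnj (w$i) * ip c c"
  proof -
    have "ip a c = (\<Sum>k\<in>UNIV. cnj (w$k) * ip (column k B) c)" by (simp add: aB ip_mv_left)
    also have "\<dots> = (\<Sum>k\<in>UNIV. (if k = i then ip c c else 0) * cnj (w$k))"
      by (simp add: ipbc mult.commute)
    also have "\<dots> = ip c c * cnj (w$i)" by (rule sum_delta_mult)
    finally show ?thesis by simp
  qed
  have ca: "ip c a = 1"
  proof -
    have "ip (B *v x) a = (\<Sum>k\<in>UNIV. cnj (x$k) * ip (column k B) a)" by (rule ip_mv_left)
    also have "\<dots> = 0" by (rule sum.neutral) (auto simp: dual xi)
    finally have "ip (B *v x) a = 0" .
    then show ?thesis by (simp add: c_def ip_diff_left dual)
  qed
  then have "ip a c = 1" by (metis ip_cnj complex_cnj_one)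
  then have "ip a a * ip c c = 1" using aa ac by simp
  then have "complex_of_real ((norm a)^2 * (norm c)^2) = 1" by (simp add: ip_self)
  then have nac: "(norm a)^2 * (norm c)^2 = 1" by (metis of_real_eq_1_iff)
  then have apos: "norm a > 0" by (cases "a = 0") auto
  obtain B' where d: "det (hermitian_transpose B' ** B') = det G"
    and ci: "column i B' = c" and ck: "\<And>k. k \<noteq> i \<Longrightarrow> column k B' = column k B"
    using col_op[OF xi, of B] c_def G_def by metis
  define Q where "Q = (\<Prod>j\<in>UNIV-{i}. (norm (column j B))^2)"
  have Q0: "Q \<ge> 0" unfolding Q_def by (simp add: prod_nonneg)
  have "(\<Prod>j\<in>UNIV. (norm (column j B'))^2) = (norm c)^2 * (\<Prod>j\<in>UNIV-{i}. (norm (column j B'))^2)"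
    by (simp add: prod.remove[of UNIV i] ci)
  also have "(\<Prod>j\<in>UNIV-{i}. (norm (column j B'))^2) = Q"
    unfolding Q_def by (rule prod.cong) (auto simp: ck)
  finally have hB': "Re (det G) \<le> (norm c)^2 * Q" using hadamard[of B'] d by simp
  have P: "(\<Prod>j\<in>UNIV. (norm (column j B))^2) = (norm (column i B))^2 * Q"
    unfolding Q_def by (simp add: prod.remove[of UNIV i])
  have "(norm a)^2 * (norm (column i B))^2 * Re (det G) \<le> (norm a)^2 * (norm (column i B))^2 * ((norm c)^2 * Q)"
    by (rule mult_left_mono[OF hB']) simp
  also have "\<dots> = (norm (column i B))^2 * Q * ((norm a)^2 * (norm c)^2)" by (simp add: algebra_simps)
  also have "\<dots> = (\<Prod>j\<in>UNIV. (norm (column j B))^2)" by (simp add: nac P)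
  finally show ?thesis using apos a_def by simp
qed


theorem lemma1:
  fixes B :: "complex ^'m ^'n"
  assumes MN: "CARD('m) \<le> CARD('n)"
    and indep: "\<forall>c :: complex ^'m. B *v c = 0 \<longrightarrow> c = 0"
  defines "G \<equiv> hermitian_transpose B ** B"
  defines "\<delta> \<equiv> (\<Prod>j\<in>UNIV. (norm (column j B))\<^sup>2) / Re (det G)"
  defines "A \<equiv> B ** matrix_inv G"
  shows "Max (range (\<lambda>j. norm (column j B))) \<le> sqrt \<delta> / Min (range (\<lambda>j. norm (column j A))) \<and>
         Max (range (\<lambda>j. norm (column j A))) \<le> sqrt \<delta> / Min (range (\<lambda>j. norm (column j B)))"
proof -
  define na where "na j = norm (column j A)" for j
  define nb where "nb j = norm (column j B)" for j
  define P where "P = (\<Prod>j\<in>UNIV. (norm (column j B))\<^sup>2)"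
  have key: "(na i)^2 * (nb i)^2 * Re (det G) \<le> P \<and> na i > 0" for i
    using key_i[OF indep, of i] unfolding na_def nb_def P_def G_def A_def by blast
  have "G *v y = 0 \<longrightarrow> y = 0" for y
  proof
    assume "G *v y = 0"
    have Gv: "(G *v y)$k = ip (column k B) (B *v y)" for k
      by (simp only: ip_mv_right) (simp add: matrix_vector_mult_def G_def gram_entry mult.commute)
    from \<open>G *v y = 0\<close> have "ip (B *v y) (B *v y) = 0"
      by (simp add: ip_mv_left flip: Gv)
    then have "B *v y = 0" by (rule ip_zero)
    then show "y = 0" using indep by blast
  qed
  then have "\<exists>X. X ** G = mat 1" using matrix_left_invertible_ker by blast
  then have "invertible G" using invertible_left_inverse by blast
  then have dG: "det G \<noteq> 0" by (simp add: invertible_det_nz)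
  have hd: "Im (det G) = 0" "0 \<le> Re (det G)" using hadamard[of B] G_def by auto
  have Dpos: "Re (det G) > 0"
  proof (rule ccontr)
    assume "\<not> Re (det G) > 0"
    then have "Re (det G) = 0" using hd by simp
    then have "det G = 0" using hd by (simp add: complex_eq_iff)
    then show False using dG by simp
  qed
  have nbpos: "nb i > 0" for i
  proof -
    have "axis i (1::complex) \<noteq> 0" by (simp add: axis_def vec_eq_iff)
    then have "B *v axis i 1 \<noteq> 0" using indep by blast
    then show ?thesis by (simp add: nb_def col_basis)
  qed
  have prodle: "na i * nb i \<le> sqrt \<delta>" for i
  proof -
    have "(na i * nb i)^2 * Re (det G) \<le> P" using key[of i] by (simp add: power_mult_distrib)
    then have "(na i * nb i)^2 \<le> P / Re (det G)" using Dpos by (simp add: pos_le_divide_eq)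
    then show ?thesis unfolding \<delta>_def P_def by (rule real_le_rsqrt)
  qed
  have napos: "na i > 0" for i using key by blast
  have "Max (range nb) \<in> range nb" by (rule Max_in) auto
  then obtain i0 where i0: "Max (range nb) = nb i0" by (metis imageE)
  have "Min (range na) \<in> range na" by (rule Min_in) auto
  then obtain j0 where j0: "Min (range na) = na j0" by (metis imageE)
  have "Max (range na) \<in> range na" by (rule Max_in) auto
  then obtain i1 where i1: "Max (range na) = na i1" by (metis imageE)
  have "Min (range nb) \<in> range nb" by (rule Min_in) auto
  then obtain j1 where j1: "Min (range nb) = nb j1" by (metis imageE)
  have "nb i0 * na j0 \<le> nb i0 * na i0"
    using Min_le[of "range na" "na i0"] j0 nbpos[of i0] by simp
  then have 1: "Max (range nb) \<le> sqrt \<delta> / Min (range na)"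
    using prodle[of i0] i0 j0 napos[of j0] by (simp add: pos_le_divide_eq mult.commute)
  have "na i1 * nb j1 \<le> na i1 * nb i1"
    using Min_le[of "range nb" "nb i1"] j1 napos[of i1] by simp
  then have 2: "Max (range na) \<le> sqrt \<delta> / Min (range nb)"
    using prodle[of i1] i1 j1 nbpos[of j1] by (simp add: pos_le_divide_eq mult.commute)
  show ?thesis using 1 2 unfolding na_def nb_def by simp
qed

end
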